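(* Let $\boldsymbol{x}\in\mathbb{R}^n\setminus\{0\}$, $\alpha>0$, and let $\boldsymbol{s}(t,\boldsymbol{x})=\boldsymbol{x}\sum_jc(t-\tau_j)$ be a stimulus (see context). Consider $$\dot{\boldsymbol{w}}=\alpha\,v(\boldsymbol{s}(t,\boldsymbol{x}),\boldsymbol{w},\theta)\,y(\boldsymbol{s}(t,\boldsymbol{x}),\boldsymbol{w})\big(\boldsymbol{s}(t,\boldsymbol{x})-\boldsymbol{w}\,y(\boldsymbol{s}(t,\boldsymbol{x}),\boldsymbol{w})\big),\qquad\boldsymbol{w}(t_0)=\boldsymbol{w}_0\ne0,$$ with solution $\boldsymbol{w}(t,\boldsymbol{w}_0)$. Let $\theta\ge0$ and $\langle\boldsymbol{w}_0,\boldsymbol{x}\rangle>\theta$, and let the stimulus be persistent: for every $t'\ge t_0$ there is $t''>t'$ with $\boldsymbol{s}(t'',\boldsymbol{x})\ne0$. Then: 1) if $\theta<\|\boldsymbol{x}\|$, then $\lim_{t\to\infty}\boldsymbol{w}(t,\boldsymbol{w}_0)=\boldsymbol{x}/\|\boldsymbol{x}\|$; 2) if $\theta\ge\|\boldsymbol{x}\|$, then $\lim_{t\to\infty}\langle\boldsymbol{w}(t,\boldsymbol{w}_0),\boldsymbol{x}/\|\boldsymbol{x}\|\rangle=\theta/\|\boldsymbol{x}\|$.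
   Context: Notation: $\langle\cdot,\cdot\rangle$ and $\|\cdot\|$ are the Euclidean inner product and norm on $\mathbb{R}^n$. Stimulus: fix $\Delta T>0$ and $c(t)=1$ for $t\in[0,\Delta T]$, $c(t)=0$ otherwise; $\boldsymbol{s}(t,\boldsymbol{x})=\boldsymbol{x}\sum_jc(t-\tau_j)$ with presentation times satisfying $\tau_{j+1}>\tau_j+\Delta T$. Neuron: $y(\boldsymbol{s},\boldsymbol{w})=\langle\boldsymbol{w},\boldsymbol{s}\rangle$, $v(\boldsymbol{s},\boldsymbol{w},\theta)=f(y(\boldsymbol{s},\boldsymbol{w})-\theta)$ with $f:\mathbb{R}\to\mathbb{R}$ continuous, locally Lipschitz, $f(u)=0$ for $u\le0$, $f(u)>0$ for $u>0$. *)

theory Defs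
  imports "HOL-Analysis.Analysis"
begin

definition pulse :: "real \<Rightarrow> real \<Rightarrow> real" where
  "pulse DT t = (if 0 \<le> t \<and> t \<le> DT then 1 else 0)"

definition stimulus :: "real \<Rightarrow> (nat \<Rightarrow> real) \<Rightarrow> real \<Rightarrow> real^'n \<Rightarrow> real^'n" where
  "stimulus DT tau t x = (\<Sum>j. pulse DT (t - tau j)) *\<^sub>R x"

definition neuron_y :: "real^'n \<Rightarrow> real^'n \<Rightarrow> real" where
  "neuron_y s w = w \<bullet> s"

definition neuron_v :: "(real \<Rightarrow> real) \<Rightarrow> real^'n \<Rightarrow> real^'n \<Rightarrow> real \<Rightarrow> real" where
  "neuron_v f s w \<theta> = f (neuron_y s w - \<theta>)"

definition learning_rhs ::
  "real \<Rightarrow> (real \<Rightarrow> real) \<Rightarrow> real \<Rightarrow> real^'n \<Rightarrow> real^'n \<Rightarrow> real^'n" where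
  "learning_rhs \<alpha> f \<theta> s w =
     (\<alpha> * neuron_v f s w \<theta> * neuron_y s w) *\<^sub>R (s - neuron_y s w *\<^sub>R w)"

end

theory Submission
  imports Defs
begin


lemma mono_fin:
  fixes h h' :: "real \<Rightarrow> real"
  assumes ab: "a \<le> b" and fin: "finite S" and cont: "continuous_on {a..b} h"
    and der: "\<And>t. t \<in> {a<..<b} - S \<Longrightarrow> (h has_real_derivative h' t) (at t)"
    and le: "\<And>t. t \<in> {a<..<b} - S \<Longrightarrow> h' t \<le> K"
  shows "h b - h a \<le> K * (b - a)"
proof -
  define k where "k t = h t - K * t" for t
  define k' where "k' t = (if t \<in> {a<..<b} - S then h' t - K else 0)" for t
  have "(k' has_integral (k b - k a)) {a..b}"
  proof (rule fundamental_theorem_of_calculus_interior_strong[OF fin ab])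
    fix t assume t: "t \<in> {a<..<b} - S"
    have "(k has_real_derivative (h' t - K)) (at t)"
      unfolding k_def using der[OF t] by (auto intro!: derivative_eq_intros)
    then show "(k has_vector_derivative k' t) (at t)"
      using t by (simp add: k'_def has_real_derivative_iff_has_vector_derivative)
  next
    show "continuous_on {a..b} k" unfolding k_def
      by (intro continuous_intros cont)
  qed
  then have "((\<lambda>t. - k' t) has_integral (- (k b - k a))) {a..b}"
    by (rule has_integral_neg)
  moreover have "\<And>t. t \<in> {a..b} \<Longrightarrow> 0 \<le> - k' t" using le by (auto simp: k'_def)
  ultimately have "0 \<le> - (k b - k a)" by (rule has_integral_nonneg)
  then show ?thesis by (simp add: k_def algebra_simps)
qed

lemma barrier:
  fixes h h' :: "real \<Rightarrow> real"
  assumes ab: "a \<le> b" and fin: "finite S" and cont: "continuous_on {a..b} h"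
    and ha: "h a \<ge> m"
    and der: "\<And>t. t \<in> {a<..<b} - S \<Longrightarrow> (h has_real_derivative h' t) (at t)"
    and pos: "\<And>t. t \<in> {a<..<b} - S \<Longrightarrow> h t < m \<Longrightarrow> h' t \<ge> 0"
  shows "h b \<ge> m"
proof (rule ccontr)
  assume hb: "\<not> h b \<ge> m"
  define Kset where "Kset = {t \<in> {a..b}. (\<lambda>_. m) t \<le> h t}"
  have cl: "closed Kset" unfolding Kset_def
    by (rule continuous_on_closed_Collect_le) (auto intro: cont continuous_intros)
  have ne: "Kset \<noteq> {}" using ha ab by (auto simp: Kset_def)
  have bdd: "bdd_above Kset" by (auto simp: Kset_def bdd_above_def)
  define s where "s = Sup Kset"
  have sK: "s \<in> Kset" using closed_contains_Sup[OF ne bdd cl] by (simp add: s_def)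
  have above: "\<And>t. t \<in> Kset \<Longrightarrow> t \<le> s" unfolding s_def using bdd by (simp add: cSup_upper)
  have sb: "s \<le> b" "a \<le> s" "h s \<ge> m" using sK by (auto simp: Kset_def)
  have "s \<noteq> b" using sK hb by (auto simp: Kset_def)
  with sb have sb': "s < b" by simp
  have "(-h) b - (-h) s \<le> 0 * (b - s)"
  proof (rule mono_fin[OF _ fin, where h'="\<lambda>t. - h' t"])
    show "s \<le> b" using sb' by simp
    show "continuous_on {s..b} (- h)"
      using cont sb by (auto intro: continuous_on_subset continuous_intros simp: fun_Compl_def)
  next
    fix t assume t: "t \<in> {s<..<b} - S"
    then have t': "t \<in> {a<..<b} - S" using sb by auto
    show "((- h) has_real_derivative - h' t) (at t)"
      using der[OF t'] by (auto intro!: derivative_eq_intros simp: fun_Compl_def)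
    have "t \<notin> Kset" using above t by force
    then have "h t < m" using t sb by (auto simp: Kset_def)
    then show "- h' t \<le> 0" using pos[OF t'] by simp
  qed
  then show False using sb hb by simp
qed



lemma decay:
  fixes h h' :: "real \<Rightarrow> real" and tau :: "nat \<Rightarrow> real"
  assumes cont: "\<And>b. continuous_on {t0..b} h"
    and fin: "\<And>b. finite (S \<inter> {..b})"
    and der: "\<And>t. t > t0 \<Longrightarrow> t \<notin> S \<Longrightarrow> (h has_real_derivative h' t) (at t)"
    and nonpos: "\<And>t. t > t0 \<Longrightarrow> t \<notin> S \<Longrightarrow> h' t \<le> 0"
    and nonneg: "\<And>t. t \<ge> t0 \<Longrightarrow> h t \<ge> 0"
    and D: "D > 0"
    and tau_step: "\<And>j. tau j + D \<le> tau (Suc j)"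
    and tau_unb: "\<And>T. \<exists>j. tau j \<ge> T"
    and rate: "\<And>L. L > 0 \<Longrightarrow> \<exists>c>0. \<forall>t j. t > t0 \<longrightarrow> t \<notin> S \<longrightarrow> tau j < t \<longrightarrow> t < tau j + D \<longrightarrow> h t \<ge> L \<longrightarrow> h' t \<le> - c"
  shows "(h \<longlongrightarrow> 0) at_top"
proof -
  have mon: "h t \<le> h s" if "t0 \<le> s" "s \<le> t" for s t
  proof -
    have "h t - h s \<le> 0 * (t - s)"
    proof (rule mono_fin[OF that(2) fin[of t], where h'=h'])
      show "continuous_on {s..t} h" using cont[of t] that by (auto intro: continuous_on_subset)
    next
      fix u assume "u \<in> {s<..<t} - S \<inter> {..t}"
      then have "u > t0" "u \<notin> S" using that by auto
      then show "(h has_real_derivative h' u) (at u)" "h' u \<le> 0" using der nonpos by auto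
    qed
    then show ?thesis by simp
  qed
  have taumono: "tau i \<le> tau j" if "i \<le> j" for i j
    using lift_Suc_mono_le[of tau, OF _ that] tau_step D by (meson add_increasing2 less_imp_le order.trans order_refl) 
  have small: "\<exists>T\<ge>t0. h T < e" if e: "e > 0" for e
  proof (rule ccontr)
    assume "\<not> (\<exists>T\<ge>t0. h T < e)"
    then have big: "\<And>T. T \<ge> t0 \<Longrightarrow> h T \<ge> e" by force
    obtain c where c: "c > 0" and cr: "\<forall>t j. t > t0 \<longrightarrow> t \<notin> S \<longrightarrow> tau j < t \<longrightarrow> t < tau j + D \<longrightarrow> h t \<ge> e \<longrightarrow> h' t \<le> - c"
      using rate[OF e] by blast
    obtain j0 where j0: "tau j0 \<ge> t0" using tau_unb by blast
    have ind: "h (tau (j0 + k)) \<le> h (tau j0) - real k * c * D" for k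
    proof (induction k)
      case 0 then show ?case by simp
    next
      case (Suc k)
      define a where "a = tau (j0 + k)"
      have a0: "a \<ge> t0" using j0 taumono[of j0 "j0+k"] by (simp add: a_def)
      have "h (a + D) - h a \<le> (- c) * (a + D - a)"
      proof (rule mono_fin[OF _ fin[of "a+D"], where h'=h'])
        show "a \<le> a + D" using D by simp
        show "continuous_on {a..a + D} h" using cont[of "a+D"] a0 by (auto intro: continuous_on_subset)
      next
        fix u assume u: "u \<in> {a<..<a + D} - S \<inter> {..a + D}"
        then have "u > t0" "u \<notin> S" using a0 by auto
        then show "(h has_real_derivative h' u) (at u)" using der by auto
        show "h' u \<le> - c" using cr \<open>u > t0\<close> \<open>u \<notin> S\<close> u big[of u] by (auto simp: a_def)
      qed
      moreover have "h (tau (j0 + Suc k)) \<le> h (a + D)"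
        using mon[of "a+D" "tau (j0 + Suc k)"] a0 D tau_step[of "j0+k"] by (simp add: a_def)
      ultimately show ?case using Suc.IH by (simp add: a_def algebra_simps)
    qed
    obtain k where k: "h (tau j0) / (c * D) < real k" using reals_Archimedean2 by blast
    then have "h (tau j0) < real k * c * D" using c D by (simp add: field_simps)
    then have "h (tau (j0 + k)) < 0" using ind[of k] by simp
    moreover have "tau (j0 + k) \<ge> t0" using j0 taumono[of j0 "j0+k"] by simp
    ultimately show False using nonneg by force
  qed
  show ?thesis
  proof (rule tendstoI)
    fix e :: real assume "e > 0"
    then obtain T where T: "T \<ge> t0" "h T < e" using small by blast
    show "eventually (\<lambda>t. dist (h t) 0 < e) at_top"
      unfolding eventually_at_top_linorder
    proof (intro exI allI impI)
      fix t assume "t \<ge> T"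
      then show "dist (h t) 0 < e" using mon[of T t] nonneg[of t] T by auto
    qed
  qed
qed



lemma fpos_bound:
  fixes f :: "real \<Rightarrow> real"
  assumes "continuous_on UNIV f" "\<forall>u>0. f u > 0" "lo > 0"
  shows "\<exists>c>0. \<forall>u\<in>{lo..hi}. f u \<ge> c"
proof (cases "lo \<le> hi")
  case False then show ?thesis by (intro exI[of _ 1]) auto
next
  case True
  obtain u0 where u0: "u0 \<in> {lo..hi}" "\<forall>y\<in>{lo..hi}. f u0 \<le> f y"
    using continuous_attains_inf[of "{lo..hi}" f] True continuous_on_subset[OF assms(1)]
    by auto
  then have "f u0 > 0" using assms by auto
  then show ?thesis using u0 by blast
qed

locale pulses =
  fixes DT :: real and tau :: "nat \<Rightarrow> real"
  assumes DT: "DT > 0" and sep: "\<forall>j. tau (Suc j) > tau j + DT"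
begin

lemma tau_lt: "i < j \<Longrightarrow> tau i + DT < tau j"
proof (induction j)
  case 0 then show ?case by simp
next
  case (Suc j)
  show ?case
  proof (cases "i = j")
    case True then show ?thesis using sep by auto
  next
    case False then have "tau i + DT < tau j" using Suc by auto
    then show ?thesis using sep[rule_format, of j] DT by linarith
  qed
qed

lemma tau_le: "i \<le> j \<Longrightarrow> tau i \<le> tau j"
  using tau_lt[of i j] DT by (cases "i = j") auto

lemma tau_lin: "tau j \<ge> tau 0 + real j * DT"
proof (induction j)
  case 0 then show ?case by simp
next
  case (Suc j) then show ?case using sep[rule_format, of j] by (simp add: algebra_simps)
qed

lemma tau_unb: "\<exists>j. tau j \<ge> T"
proof -
  obtain j where "(T - tau 0) / DT < real j" using reals_Archimedean2 by blast
  then have "T - tau 0 < real j * DT" using DT by (simp add: field_simps)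
  then show ?thesis using tau_lin[of j] by (intro exI[of _ j]) simp
qed

definition inP :: "real \<Rightarrow> bool" where
  "inP r \<longleftrightarrow> (\<exists>j. tau j \<le> r \<and> r \<le> tau j + DT)"

lemma sigma_eq: "(\<Sum>j. pulse DT (r - tau j)) = (if inP r then 1 else 0)"
proof (cases "inP r")
  case True
  then obtain j where j: "tau j \<le> r" "r \<le> tau j + DT" by (auto simp: inP_def)
  have "(\<lambda>k. pulse DT (r - tau k)) = (\<lambda>k. if k = j then 1 else 0)"
  proof
    fix k show "pulse DT (r - tau k) = (if k = j then 1 else 0)"
    proof (cases "k = j")
      case True then show ?thesis using j by (simp add: pulse_def)
    next
      case False
      then have "k < j \<or> j < k" by auto
      then have "\<not> (tau k \<le> r \<and> r \<le> tau k + DT)"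
        using tau_lt[of k j] tau_lt[of j k] j by auto
      then show ?thesis using False by (auto simp: pulse_def)
    qed
  qed
  then have "(\<Sum>j. pulse DT (r - tau j)) = 1"
    using sums_single[of j "\<lambda>_. (1::real)"] sums_unique by (metis (no_types, lifting))
  then show ?thesis using True by simp
next
  case False
  then have "(\<lambda>k. pulse DT (r - tau k)) = (\<lambda>k. 0)" by (auto simp: inP_def pulse_def fun_eq_iff)
  then show ?thesis using False by simp
qed

definition Bset :: "real set" where "Bset = range tau \<union> range (\<lambda>j. tau j + DT)"

lemma B_fin: "finite (Bset \<inter> {..b})"
proof -
  obtain N where N: "tau N > b" using tau_unb[of "b+1"] by (meson less_add_one order_less_le_trans)
  have "Bset \<inter> {..b} \<subseteq> tau ` {..N} \<union> (\<lambda>j. tau j + DT) ` {..N}"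
  proof
    fix r assume r: "r \<in> Bset \<inter> {..b}"
    then obtain j where "r = tau j \<or> r = tau j + DT" by (auto simp: Bset_def)
    moreover have "j \<le> N"
    proof (rule ccontr)
      assume "\<not> j \<le> N" then have "tau N + DT < tau j" using tau_lt by simp
      then show False using r N DT calculation by auto
    qed
    ultimately show "r \<in> tau ` {..N} \<union> (\<lambda>j. tau j + DT) ` {..N}" by auto
  qed
  then show ?thesis by (rule finite_subset) auto
qed

lemma loc_const:
  assumes r: "r \<notin> Bset"
  shows "\<exists>e>0. \<forall>r'. dist r' r < e \<longrightarrow> (inP r' \<longleftrightarrow> inP r)"
proof (cases "inP r")
  case True
  then obtain j where j: "tau j \<le> r" "r \<le> tau j + DT" by (auto simp: inP_def)
  then have j': "tau j < r" "r < tau j + DT" using r by (auto simp: Bset_def order.order_iff_strict)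
  show ?thesis
  proof (intro exI[of _ "min (r - tau j) (tau j + DT - r)"] conjI allI impI)
    show "0 < min (r - tau j) (tau j + DT - r)" using j' by simp
    fix r' assume "dist r' r < min (r - tau j) (tau j + DT - r)"
    then have "tau j \<le> r'" "r' \<le> tau j + DT" by (auto simp: dist_real_def)
    then show "inP r' = inP r" using True by (auto simp: inP_def)
  qed
next
  case False
  define k where "k = (LEAST j. tau j > r)"
  have ex: "\<exists>j. tau j > r" using tau_unb[of "r+1"] by (meson less_add_one order_less_le_trans)
  have k: "tau k > r" unfolding k_def using LeastI_ex[OF ex] .
  have kmin: "\<And>j. j < k \<Longrightarrow> tau j \<le> r" unfolding k_def using not_less_Least by force
  show ?thesis
  proof (cases k)
    case 0
    show ?thesis
    proof (intro exI[of _ "tau 0 - r"] conjI allI impI)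
      show "0 < tau 0 - r" using k 0 by simp
      fix r' assume "dist r' r < tau 0 - r"
      then have "r' < tau 0" by (auto simp: dist_real_def)
      then have "\<not> inP r'" unfolding inP_def using tau_le[of 0] by (meson le0 order.trans not_le)
      then show "inP r' = inP r" using False by simp
    qed
  next
    case (Suc k')
    have "tau k' \<le> r" using kmin Suc by simp
    then have a: "tau k' + DT < r" using False r
      by (auto simp: inP_def Bset_def order.order_iff_strict)
    show ?thesis
    proof (intro exI[of _ "min (tau k - r) (r - (tau k' + DT))"] conjI allI impI)
      show "0 < min (tau k - r) (r - (tau k' + DT))" using k a by simp
      fix r' assume "dist r' r < min (tau k - r) (r - (tau k' + DT))"
      then have r': "r' < tau k" "tau k' + DT < r'" by (auto simp: dist_real_def)
      have "\<not> inP r'"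
      proof
        assume "inP r'"
        then obtain j where j: "tau j \<le> r'" "r' \<le> tau j + DT" by (auto simp: inP_def)
        show False
        proof (cases "j \<le> k'")
          case True then show ?thesis using tau_le[of j k'] j r' by simp
        next
          case False then have "k \<le> j" using Suc by simp
          then show ?thesis using tau_le[of k j] j r' by simp
        qed
      qed
      then show "inP r' = inP r" using False by simp
    qed
  qed
qed

end



lemma vec_inner_der:
  fixes w :: "real \<Rightarrow> 'a::real_inner"
  assumes "(w has_vector_derivative w') (at t)"
  shows "((\<lambda>r. w r \<bullet> x) has_real_derivative (w' \<bullet> x)) (at t)"
proof -
  have "((\<lambda>r. w r \<bullet> x) has_derivative (\<lambda>h. (h *\<^sub>R w') \<bullet> x)) (at t)"
    using assms unfolding has_vector_derivative_def by (rule has_derivative_inner_left)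
  moreover have "(\<lambda>h. (h *\<^sub>R w') \<bullet> x) = (*) (w' \<bullet> x)" by (auto simp: fun_eq_iff)
  ultimately show ?thesis by (simp add: has_field_derivative_def)
qed

lemma vec_sq_der:
  fixes w :: "real \<Rightarrow> 'a::real_inner"
  assumes "(w has_vector_derivative w') (at t)"
  shows "((\<lambda>r. w r \<bullet> w r) has_real_derivative (2 * (w t \<bullet> w'))) (at t)"
proof -
  have d: "(w has_derivative (\<lambda>h. h *\<^sub>R w')) (at t)"
    using assms unfolding has_vector_derivative_def .
  have "((\<lambda>r. w r \<bullet> w r) has_derivative (\<lambda>h. w t \<bullet> (h *\<^sub>R w') + (h *\<^sub>R w') \<bullet> w t)) (at t)"
    by (rule has_derivative_inner[OF d d])
  moreover have "(\<lambda>h. w t \<bullet> (h *\<^sub>R w') + (h *\<^sub>R w') \<bullet> w t) = (*) (2 * (w t \<bullet> w'))"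
    by (auto simp: fun_eq_iff inner_commute algebra_simps)
  ultimately show ?thesis by (simp add: has_field_derivative_def)
qed

theorem lemma2:
  fixes f :: "real \<Rightarrow> real" and x w0 :: "real^'n"
    and w :: "real \<Rightarrow> real^'n" and tau :: "nat \<Rightarrow> real"
    and DT \<alpha> \<theta> t0 :: real
  assumes f_cont: "continuous_on UNIV f"
    and f_loclip: "\<forall>u. \<exists>e>0. \<exists>L. L-lipschitz_on (cball u e) f"
    and f_nonpos: "\<forall>u\<le>0. f u = 0"
    and f_pos: "\<forall>u>0. f u > 0"
    and DT_pos: "DT > 0"
    and tau_sep: "\<forall>j. tau (Suc j) > tau j + DT"
    and x_nz: "x \<noteq> 0"
    and alpha_pos: "\<alpha> > 0"
    and w0_nz: "w0 \<noteq> 0"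
    and sol: "\<forall>t\<ge>t0. ((\<lambda>r. learning_rhs \<alpha> f \<theta> (stimulus DT tau r x) (w r))
                 has_integral (w t - w0)) {t0..t}"
    and theta_nonneg: "\<theta> \<ge> 0"
    and init: "w0 \<bullet> x > \<theta>"
    and persistent: "\<forall>t'\<ge>t0. \<exists>t''>t'. stimulus DT tau t'' x \<noteq> 0"
  shows "(\<theta> < norm x \<longrightarrow> (w \<longlongrightarrow> x /\<^sub>R norm x) at_top) \<and>
         (\<theta> \<ge> norm x \<longrightarrow>
            ((\<lambda>t. w t \<bullet> (x /\<^sub>R norm x)) \<longlongrightarrow> \<theta> / norm x) at_top)"
proof -
  interpret P: pulses DT tau using DT_pos tau_sep by unfold_locales
  define a where "a = norm x"
  have a: "a > 0" using x_nz by (simp add: a_def)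
  have xx: "x \<bullet> x = a^2" by (simp add: a_def power2_norm_eq_inner)
  define g where "g = (\<lambda>r. learning_rhs \<alpha> f \<theta> (stimulus DT tau r x) (w r))"
  define p where "p t = w t \<bullet> x" for t
  have fnn: "f u \<ge> 0" for u using f_nonpos f_pos by (cases "u \<le> 0") (auto intro: less_imp_le)
  have stim: "stimulus DT tau r x = (if P.inP r then x else 0)" for r
    using P.sigma_eq by (simp add: stimulus_def)
  have g_on: "P.inP r \<Longrightarrow> g r = (\<alpha> * f (p r - \<theta>) * p r) *\<^sub>R (x - p r *\<^sub>R w r)" for r
    by (simp add: g_def stim learning_rhs_def neuron_v_def neuron_y_def p_def)
  have g_off: "\<not> P.inP r \<Longrightarrow> g r = 0" for r
    by (simp add: g_def stim learning_rhs_def neuron_y_def)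
  have hi: "(g has_integral (w t - w0)) {t0..t}" if "t \<ge> t0" for t
    using sol that by (simp add: g_def)
  have w_eq: "w t = w0 + integral {t0..t} g" if "t \<ge> t0" for t
    using hi[OF that] by (simp add: integral_unique)
  have w_t0: "w t0 = w0" using w_eq[of t0] by simp
  have cont_w: "continuous_on {t0..b} w" for b
  proof (cases "t0 \<le> b")
    case False then show ?thesis by simp
  next
    case True
    have "continuous_on {t0..b} (\<lambda>t. w0 + integral {t0..t} g)"
      using indefinite_integral_continuous_1[of g t0 b] hi[OF True]
      by (auto intro!: continuous_intros simp: has_integral_integrable)
    then show ?thesis using continuous_on_cong[of "{t0..b}" "{t0..b}" w] w_eq by auto
  qed
  have der_w: "(w has_vector_derivative g t) (at t)" if t: "t > t0" "t \<notin> P.Bset" for t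
  proof -
    obtain e where e: "e > 0" "\<forall>r'. dist r' t < e \<longrightarrow> (P.inP r' \<longleftrightarrow> P.inP t)"
      using P.loc_const[OF t(2)] by blast
    have wc: "isCont w t"
      using continuous_on_interior[OF cont_w[of "t+1"]] t by simp
    define G where "G r = learning_rhs \<alpha> f \<theta> (stimulus DT tau t x) (w r)" for r
    have fc: "isCont f u" for u using f_cont by (simp add: continuous_on_eq_continuous_at)
    have "isCont (\<lambda>r. neuron_y (stimulus DT tau t x) (w r) - \<theta>) t"
      unfolding neuron_y_def using wc by (intro continuous_intros)
    then have "isCont (\<lambda>r. f (neuron_y (stimulus DT tau t x) (w r) - \<theta>)) t"
      using isCont_o2 fc by blast
    then have Gc: "isCont G t"
      unfolding G_def learning_rhs_def neuron_v_def using wc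
      by (intro continuous_intros) (auto simp: neuron_y_def intro: continuous_intros)
    have "eventually (\<lambda>r. g r = G r) (nhds t)"
      unfolding eventually_nhds_metric
    proof (intro exI[of _ e] conjI allI impI)
      fix r assume "dist r t < e"
      then have "stimulus DT tau r x = stimulus DT tau t x" using e(2) stim by metis
      then show "g r = G r" unfolding g_def G_def by simp
    qed (rule e(1))
    then have gc: "isCont g t" using Gc isCont_cong by blast
    have int: "g integrable_on {t0..t+1}" using hi[of "t+1"] t by (auto simp: has_integral_integrable)
    have "((\<lambda>u. integral {t0..u} g) has_vector_derivative g t) (at t within ({t0..t+1} - {}))"
      by (rule integral_has_vector_derivative_continuous_at[OF int])
         (use t gc in \<open>auto intro: continuous_at_imp_continuous_within\<close>)
    then have "((\<lambda>u. integral {t0..u} g) has_vector_derivative g t) (at t)"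
      using at_within_interior[of t "{t0..t+1}"] t by simp
    then have "((\<lambda>u. w0 + integral {t0..u} g) has_vector_derivative g t) (at t)"
      by (auto intro!: derivative_eq_intros)
    then show ?thesis
      by (rule has_vector_derivative_transform_within_open[where S="{t0<..<t+1}"])
         (use t w_eq in auto)
  qed
  define pd where "pd t = g t \<bullet> x" for t
  have fin: "finite (P.Bset \<inter> {..b})" for b by (rule P.B_fin)
  have dp: "(p has_real_derivative pd t) (at t)" if "t > t0" "t \<notin> P.Bset" for t
    unfolding p_def pd_def by (rule vec_inner_der[OF der_w[OF that]])
  have cont_p: "continuous_on {t0..b} p" for b
    unfolding p_def by (intro continuous_intros cont_w)
  have pd_on: "pd t = \<alpha> * f (p t - \<theta>) * p t * (a^2 - (p t)^2)" if "P.inP t" for t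
  proof -
    have "pd t = (\<alpha> * f (p t - \<theta>) * p t) * (x \<bullet> x - p t * (w t \<bullet> x))"
      unfolding pd_def g_on[OF that] by (simp add: inner_diff_left)
    also have "\<dots> = \<alpha> * f (p t - \<theta>) * p t * (a^2 - (p t)^2)"
      by (simp add: xx p_def[symmetric] power2_eq_square)
    finally show ?thesis .
  qed
  have pd_off: "pd t = 0" if "\<not> P.inP t" for t
    using g_off[OF that] by (simp add: pd_def)
  have inP_int: "P.inP t" if "tau j < t" "t < tau j + DT" for t j
    using that unfolding P.inP_def by (intro exI[of _ j]) simp
  define p0 where "p0 = w0 \<bullet> x"
  have pt0: "p t0 = p0" by (simp add: p_def p0_def w_t0)
  have lowbar: "p t \<ge> m" if "t \<ge> t0" "p0 \<ge> m"
     and H: "\<And>t. t > t0 \<Longrightarrow> p t < m \<Longrightarrow> P.inP t \<Longrightarrow> pd t \<ge> 0" for t m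
  proof (rule barrier[OF that(1) fin[of t] cont_p, where h'=pd])
    show "m \<le> p t0" using pt0 that by simp
  next
    fix u assume u: "u \<in> {t0<..<t} - P.Bset \<inter> {..t}"
    then show "(p has_real_derivative pd u) (at u)" using dp by auto
    show "p u < m \<Longrightarrow> 0 \<le> pd u" using H[of u] u pd_off[of u] by (cases "P.inP u") auto
  qed
  have upbar: "p t \<le> M" if "t \<ge> t0" "p0 \<le> M"
     and H: "\<And>t. t > t0 \<Longrightarrow> p t > M \<Longrightarrow> P.inP t \<Longrightarrow> pd t \<le> 0" for t M
  proof -
    have "(\<lambda>t. - p t) t \<ge> - M"
    proof (rule barrier[OF that(1) fin[of t], where h'="\<lambda>t. - pd t"])
      show "continuous_on {t0..t} (\<lambda>t. - p t)" using cont_p by (intro continuous_intros)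
      show "- M \<le> - p t0" using pt0 that by simp
    next
      fix u assume u: "u \<in> {t0<..<t} - P.Bset \<inter> {..t}"
      then show "((\<lambda>t. - p t) has_real_derivative - pd u) (at u)" using dp by (auto intro!: derivative_eq_intros)
      show "- p u < - M \<Longrightarrow> 0 \<le> - pd u" using H[of u] u pd_off[of u] by (cases "P.inP u") auto
    qed
    then show ?thesis by simp
  qed
  show ?thesis
  proof (intro conjI impI)
    assume th: "\<theta> < norm x"
    then have tha: "\<theta> < a" by (simp add: a_def)
    define m where "m = min p0 a"
    define M where "M = max p0 a"
    have mth: "m > \<theta>" using tha init by (simp add: m_def p0_def)
    have m0: "m > 0" using mth theta_nonneg by simp
    have mM: "m \<le> M" "m \<le> a" "a \<le> M" by (auto simp: m_def M_def)
    have plow: "p t \<ge> m" if "t \<ge> t0" for t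
    proof (rule lowbar[OF that])
      show "m \<le> p0" by (simp add: m_def)
      fix t assume t: "t > t0" "p t < m" "P.inP t"
      show "pd t \<ge> 0"
      proof (cases "p t \<le> \<theta>")
        case True then show ?thesis using pd_on[OF t(3)] f_nonpos by simp
      next
        case False
        then have "p t > 0" using theta_nonneg by simp
        moreover have "(p t)^2 < a^2" using t mM \<open>p t > 0\<close> by (intro power_strict_mono) auto
        ultimately show ?thesis using pd_on[OF t(3)] fnn alpha_pos by simp
      qed
    qed
    have pup: "p t \<le> M" if "t \<ge> t0" for t
    proof (rule upbar[OF that])
      show "p0 \<le> M" by (simp add: M_def)
      fix t assume t: "t > t0" "p t > M" "P.inP t"
      then have "p t > 0" "a^2 \<le> (p t)^2" using mM a by (auto intro: power_mono)
      then show "pd t \<le> 0" using pd_on[OF t(3)] fnn alpha_pos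
        by (simp add: mult_nonneg_nonpos)
    qed
    obtain c1 where c1: "c1 > 0" "\<forall>u\<in>{m - \<theta>..M - \<theta>}. f u \<ge> c1"
      using fpos_bound[OF f_cont f_pos, of "m - \<theta>"] mth by auto
    have fb: "f (p t - \<theta>) \<ge> c1" if "t \<ge> t0" for t using c1 plow[OF that] pup[OF that] by auto
    define q where "q t = (p t - a)^2" for t
    define qd where "qd t = 2 * (p t - a) * pd t" for t
    have qd_on: "qd t = - (2 * \<alpha> * f (p t - \<theta>) * p t * (a + p t) * q t)" if "P.inP t" for t
      unfolding qd_def q_def pd_on[OF that] power2_eq_square by (simp add: algebra_simps)
    have qd_off: "qd t = 0" if "\<not> P.inP t" for t using pd_off[OF that] by (simp add: qd_def)
    have limq: "(q \<longlongrightarrow> 0) at_top"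
    proof (rule decay[of t0 q P.Bset qd DT tau])
      show "continuous_on {t0..b} q" for b unfolding q_def using cont_p by (intro continuous_intros)
      show "finite (P.Bset \<inter> {..b})" for b by (rule fin)
      show "(q has_real_derivative qd t) (at t)" if "t > t0" "t \<notin> P.Bset" for t
        unfolding q_def qd_def using dp[OF that] by (auto intro!: derivative_eq_intros)
      show "qd t \<le> 0" if "t > t0" for t
      proof (cases "P.inP t")
        case True
        have "0 \<le> 2 * \<alpha> * f (p t - \<theta>) * p t * (a + p t) * q t"
          using plow[of t] that m0 a alpha_pos fnn[of "p t - \<theta>"] by (simp add: q_def)
        then show ?thesis using qd_on[OF True] by simp
      qed (simp add: qd_off)
      show "q t \<ge> 0" if "t \<ge> t0" for t by (simp add: q_def)
      show "DT > 0" by (rule DT_pos)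
      show "tau j + DT \<le> tau (Suc j)" for j using tau_sep by (simp add: less_imp_le)
      show "\<exists>j. tau j \<ge> T" for T by (rule P.tau_unb)
    next
      fix L :: real assume L: "L > 0"
      define c where "c = 2 * \<alpha> * c1 * m * (a + m) * L"
      have "c > 0" unfolding c_def using alpha_pos c1 L m0 a by simp
      moreover have "qd t \<le> - c" if t: "t > t0" "tau j < t" "t < tau j + DT" "q t \<ge> L" for t j
      proof -
        have ip: "P.inP t" using inP_int t by blast
        have "2 * \<alpha> * c1 * m * (a + m) * L \<le> 2 * \<alpha> * f (p t - \<theta>) * p t * (a + p t) * q t"
          using alpha_pos c1 fb[of t] t L m0 a plow[of t]
          by (intro mult_mono) (auto intro: mult_nonneg_nonneg)
        then show ?thesis using qd_on[OF ip] by (simp add: c_def)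
      qed
      ultimately show "\<exists>c>0. \<forall>t j. t0 < t \<longrightarrow> t \<notin> P.Bset \<longrightarrow> tau j < t \<longrightarrow> t < tau j + DT \<longrightarrow> L \<le> q t \<longrightarrow> qd t \<le> - c"
        by blast
    qed
    have limp: "(p \<longlongrightarrow> a) at_top"
    proof -
      have "((\<lambda>t. sqrt (q t)) \<longlongrightarrow> sqrt 0) at_top" by (intro tendsto_intros limq)
      then have "((\<lambda>t. norm (p t - a)) \<longlongrightarrow> 0) at_top" by (simp add: q_def)
      then have "((\<lambda>t. p t - a) \<longlongrightarrow> 0) at_top" using tendsto_rabs_zero_iff[of "\<lambda>t. p t - a"] by simp
      then have "((\<lambda>t. p t - a + a) \<longlongrightarrow> 0 + a) at_top" by (intro tendsto_intros)
      then show ?thesis by simp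
    qed
    define r where "r t = w t \<bullet> w t - (p t)^2 / a^2" for t
    define rd where "rd t = 2 * (w t \<bullet> g t) - 2 * p t * pd t / a^2" for t
    have rd_on: "rd t = - (2 * \<alpha> * f (p t - \<theta>) * (p t)^2 * r t)" if "P.inP t" for t
    proof -
      have wg: "w t \<bullet> g t = \<alpha> * f (p t - \<theta>) * p t * (p t - p t * (w t \<bullet> w t))"
        unfolding g_on[OF that] by (simp add: inner_diff_right p_def)
      show ?thesis unfolding rd_def r_def wg pd_on[OF that] using a
        by (simp add: field_simps power2_eq_square)
    qed
    have rd_off: "rd t = 0" if "\<not> P.inP t" for t using pd_off[OF that] g_off[OF that] by (simp add: rd_def)
    have rnn: "r t \<ge> 0" for t
    proof -
      have "(p t)^2 \<le> (w t \<bullet> w t) * a^2" using Cauchy_Schwarz_ineq[of "w t" x] by (simp add: p_def xx)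
      then show ?thesis using a by (simp add: r_def field_simps)
    qed
    have limr: "(r \<longlongrightarrow> 0) at_top"
    proof (rule decay[of t0 r P.Bset rd DT tau])
      show "continuous_on {t0..b} r" for b unfolding r_def using cont_p cont_w a
        by (intro continuous_intros) auto
      show "finite (P.Bset \<inter> {..b})" for b by (rule fin)
      show "(r has_real_derivative rd t) (at t)" if "t > t0" "t \<notin> P.Bset" for t
        unfolding r_def rd_def using dp[OF that] vec_sq_der[OF der_w[OF that]] a
        by (auto intro!: derivative_eq_intros) (auto simp: field_simps power2_eq_square power4_eq_xxxx)
      show "rd t \<le> 0" if "t > t0" for t
      proof (cases "P.inP t")
        case True
        have "0 \<le> 2 * \<alpha> * f (p t - \<theta>) * (p t)^2 * r t"
          using alpha_pos fnn[of "p t - \<theta>"] rnn[of t] by simp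
        then show ?thesis using rd_on[OF True] by simp
      qed (simp add: rd_off)
      show "r t \<ge> 0" if "t \<ge> t0" for t by (rule rnn)
      show "DT > 0" by (rule DT_pos)
      show "tau j + DT \<le> tau (Suc j)" for j using tau_sep by (simp add: less_imp_le)
      show "\<exists>j. tau j \<ge> T" for T by (rule P.tau_unb)
    next
      fix L :: real assume L: "L > 0"
      define c where "c = 2 * \<alpha> * c1 * m^2 * L"
      have "c > 0" unfolding c_def using alpha_pos c1 L m0 by simp
      moreover have "rd t \<le> - c" if t: "t > t0" "tau j < t" "t < tau j + DT" "r t \<ge> L" for t j
      proof -
        have ip: "P.inP t" using inP_int t by blast
        have "m^2 \<le> (p t)^2" using plow[of t] t m0 by (intro power_mono) auto
        then have "2 * \<alpha> * c1 * m^2 * L \<le> 2 * \<alpha> * f (p t - \<theta>) * (p t)^2 * r t"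
          using alpha_pos c1 fb[of t] t L m0
          by (intro mult_mono) (auto intro: mult_nonneg_nonneg)
        then show ?thesis using rd_on[OF ip] by (simp add: c_def)
      qed
      ultimately show "\<exists>c>0. \<forall>t j. t0 < t \<longrightarrow> t \<notin> P.Bset \<longrightarrow> tau j < t \<longrightarrow> t < tau j + DT \<longrightarrow> L \<le> r t \<longrightarrow> rd t \<le> - c"
        by blast
    qed
    define u where "u t = w t - (p t / a^2) *\<^sub>R x" for t
    have uu: "norm (u t) = sqrt (r t)" for t
    proof -
      have "u t \<bullet> u t = r t" using a
        by (simp add: u_def r_def inner_diff_left inner_diff_right xx p_def inner_commute field_simps power2_eq_square)
      then show ?thesis by (simp add: norm_eq_sqrt_inner)
    qed
    have "((\<lambda>t. norm (u t)) \<longlongrightarrow> sqrt 0) at_top" unfolding uu by (intro tendsto_intros limr)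
    then have limu: "(u \<longlongrightarrow> 0) at_top" by (simp add: tendsto_norm_zero_iff)
    have lim1: "((\<lambda>t. u t + (p t / a^2) *\<^sub>R x) \<longlongrightarrow> 0 + (a / a^2) *\<^sub>R x) at_top"
      by (intro tendsto_intros limu limp) (use a in auto)
    have eqw: "(\<lambda>t. u t + (p t / a^2) *\<^sub>R x) = w" by (auto simp: u_def fun_eq_iff)
    have eql: "0 + (a / a^2) *\<^sub>R x = x /\<^sub>R norm x" using a by (simp add: a_def power2_eq_square divide_inverse)
    show "(w \<longlongrightarrow> x /\<^sub>R norm x) at_top" using lim1 unfolding eqw eql .
  next
    assume th: "\<theta> \<ge> norm x"
    then have tha: "\<theta> \<ge> a" by (simp add: a_def)
    have plow: "p t \<ge> \<theta>" if "t \<ge> t0" for t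
    proof (rule lowbar[OF that])
      show "\<theta> \<le> p0" using init p0_def by simp
      fix t assume "t > t0" "p t < \<theta>" "P.inP t"
      then show "pd t \<ge> 0" using pd_on f_nonpos by simp
    qed
    have pup: "p t \<le> p0" if "t \<ge> t0" for t
    proof (rule upbar[OF that order_refl])
      fix t assume t: "t > t0" "p t > p0" "P.inP t"
      then have "p t > 0" "a^2 - (p t)^2 \<le> 0" using init p0_def tha a
        by (auto simp: power_mono)
      then show "pd t \<le> 0" using pd_on[OF t(3)] fnn alpha_pos
        by (simp add: mult_nonneg_nonpos)
    qed
    have pdneg: "pd t \<le> 0" if "t > t0" for t
    proof (cases "P.inP t")
      case True
      have "p t > 0" "a^2 - (p t)^2 \<le> 0" using plow[of t] that tha a by (auto simp: power_mono)
      then show ?thesis using pd_on[OF True] fnn alpha_pos by (simp add: mult_nonneg_nonpos)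
    qed (simp add: pd_off)
    have lim: "((\<lambda>t. p t - \<theta>) \<longlongrightarrow> 0) at_top"
    proof (rule decay[of t0 "\<lambda>t. p t - \<theta>" P.Bset pd DT tau])
      show "continuous_on {t0..b} (\<lambda>t. p t - \<theta>)" for b using cont_p by (intro continuous_intros)
      show "finite (P.Bset \<inter> {..b})" for b by (rule fin)
      show "((\<lambda>t. p t - \<theta>) has_real_derivative pd t) (at t)" if "t > t0" "t \<notin> P.Bset" for t
        using dp[OF that] by (auto intro!: derivative_eq_intros)
      show "pd t \<le> 0" if "t > t0" for t using pdneg that by simp
      show "p t - \<theta> \<ge> 0" if "t \<ge> t0" for t using plow that by simp
      show "DT > 0" by (rule DT_pos)
      show "tau j + DT \<le> tau (Suc j)" for j using tau_sep by (simp add: less_imp_le)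
      show "\<exists>j. tau j \<ge> T" for T by (rule P.tau_unb)
    next
      fix L :: real assume L: "L > 0"
      obtain c1 where c1: "c1 > 0" "\<forall>u\<in>{L..p0 - \<theta>}. f u \<ge> c1"
        using fpos_bound[OF f_cont f_pos L] by blast
      define c where "c = \<alpha> * c1 * (\<theta> + L) * ((\<theta> + L)^2 - a^2)"
      have "a^2 < (\<theta> + L)^2" by (rule power_strict_mono) (use tha a L in auto)
      then have pos2: "(\<theta> + L)^2 - a^2 > 0" by simp
      have "c > 0" unfolding c_def using alpha_pos c1 L theta_nonneg pos2 by simp
      moreover have "pd t \<le> - c" if t: "t > t0" "tau j < t" "t < tau j + DT" "p t - \<theta> \<ge> L" for t j
      proof -
        have ip: "P.inP t" using inP_int t by blast
        have ft: "f (p t - \<theta>) \<ge> c1" using c1 t pup[of t] by auto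
        have e1: "(\<theta> + L)^2 - a^2 \<le> (p t)^2 - a^2" using t L theta_nonneg
          by (simp add: power_mono)
        have "\<alpha> * c1 * (\<theta> + L) * ((\<theta> + L)^2 - a^2) \<le> \<alpha> * f (p t - \<theta>) * p t * ((p t)^2 - a^2)"
          using alpha_pos c1 ft t L theta_nonneg pos2 e1
          by (intro mult_mono) (auto intro: mult_nonneg_nonneg)
        then show ?thesis using pd_on[OF ip] by (simp add: c_def algebra_simps)
      qed
      ultimately show "\<exists>c>0. \<forall>t j. t0 < t \<longrightarrow> t \<notin> P.Bset \<longrightarrow> tau j < t \<longrightarrow> t < tau j + DT \<longrightarrow> L \<le> p t - \<theta> \<longrightarrow> pd t \<le> - c"
        by blast
    qed
    have "((\<lambda>t. (p t - \<theta> + \<theta>) / a) \<longlongrightarrow> (0 + \<theta>) / a) at_top"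
      by (intro tendsto_intros lim) (use a in auto)
    then show "((\<lambda>t. w t \<bullet> (x /\<^sub>R norm x)) \<longlongrightarrow> \<theta> / norm x) at_top"
      by (simp add: p_def a_def divide_inverse mult.commute)
  qed
qed

end
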